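(* Let $G$ be a finite simple graph, let $C$ be an induced cycle in $G$, and let $n\geq 2$ be an integer such that at most $n$ vertices of $C$ are adjacent to vertices of $G\setminus C$. Let $c$ be a number such that $\mathbf{c}(H)\leq c$ for every induced subgraph $H$ of $G\setminus C$. Then $\mathbf{c}(G)\leq c\,\ell(n)$.
   Context: For a finite simple graph $G$, its independence complex $\mathrm{Ind}(G)$ is the set of all independent vertex subsets of $G$ (including the empty set), partially ordered by inclusion. A matching on this poset is a set of pairs $\{\sigma,\tau\}$ of elements with $\tau$ covering $\sigma$ (i.e. $\sigma\subset\tau$, $|\tau|=|\sigma|+1$), such that distinct pairs are disjoint. A sequence of $n>1$ distinct pairs $\{\sigma_1\subset\tau_1\},\ldots,\{\sigma_n\subset\tau_n\}$ of the matching is a cycle if $\tau_i\supset\sigma_{i+1}$ for $1\leq i<n$ and $\tau_n\supset\sigma_1$; the matching is acyclic if it has no cycles. Elements of $\mathrm{Ind}(G)$ not in any matched pair are critical. $\mathbf{c}(G)$ denotes the minimal number of critical elements over all acyclic matchings on $\mathrm{Ind}(G)$. $G\setminus C$ denotes the induced subgraph on the vertices not in $C$. The Fibonacci numbers are $\varphi(0)=0$, $\varphi(1)=1$, $\varphi(n)=\varphi(n-1)+\varphi(n-2)$, and the Lucas numbers are $\ell(n)=\varphi(n-1)+\varphi(n+1)$. *)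

theory Defs
  imports Complex_Main "HOL-Number_Theory.Fib"
begin

definition simple_graph :: "'a set \<Rightarrow> ('a \<Rightarrow> 'a \<Rightarrow> bool) \<Rightarrow> bool" where
  "simple_graph V E \<longleftrightarrow> finite V \<and> (\<forall>x y. E x y \<longrightarrow> x \<in> V \<and> y \<in> V)
     \<and> (\<forall>x y. E x y \<longrightarrow> E y x) \<and> (\<forall>x. \<not> E x x)"

definition Ind :: "'a set \<Rightarrow> ('a \<Rightarrow> 'a \<Rightarrow> bool) \<Rightarrow> 'a set set" where
  "Ind W E = {S. S \<subseteq> W \<and> (\<forall>x\<in>S. \<forall>y\<in>S. \<not> E x y)}"

definition is_matching :: "'a set set \<Rightarrow> ('a set \<times> 'a set) set \<Rightarrow> bool" where
  "is_matching P M \<longleftrightarrow>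
     (\<forall>(s,t)\<in>M. s \<in> P \<and> t \<in> P \<and> s \<subset> t \<and> card t = card s + 1) \<and>
     (\<forall>p\<in>M. \<forall>q\<in>M. p \<noteq> q \<longrightarrow> {fst p, snd p} \<inter> {fst q, snd q} = {})"

definition is_cycle :: "('a set \<times> 'a set) set \<Rightarrow> ('a set \<times> 'a set) list \<Rightarrow> bool" where
  "is_cycle M ps \<longleftrightarrow> length ps > 1 \<and> distinct ps \<and> set ps \<subseteq> M \<and>
     (\<forall>i < length ps. snd (ps ! i) \<supset> fst (ps ! ((i + 1) mod length ps)))"

definition acyclic_matching :: "'a set set \<Rightarrow> ('a set \<times> 'a set) set \<Rightarrow> bool" where
  "acyclic_matching P M \<longleftrightarrow> is_matching P M \<and> (\<nexists>ps. is_cycle M ps)"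

definition critical :: "'a set set \<Rightarrow> ('a set \<times> 'a set) set \<Rightarrow> 'a set set" where
  "critical P M = {s \<in> P. \<forall>p\<in>M. s \<noteq> fst p \<and> s \<noteq> snd p}"

definition cmin :: "'a set \<Rightarrow> ('a \<Rightarrow> 'a \<Rightarrow> bool) \<Rightarrow> nat" where
  "cmin W E = Min {card (critical (Ind W E) M) | M. acyclic_matching (Ind W E) M}"

definition induced_cycle :: "'a set \<Rightarrow> ('a \<Rightarrow> 'a \<Rightarrow> bool) \<Rightarrow> 'a set \<Rightarrow> bool" where
  "induced_cycle V E C \<longleftrightarrow> C \<subseteq> V \<and> (\<exists>vs. distinct vs \<and> set vs = C \<and> length vs \<ge> 3 \<and>
     (\<forall>i < length vs. \<forall>j < length vs. E (vs ! i) (vs ! j) \<longleftrightarrow>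
        (j = (i + 1) mod length vs \<or> i = (j + 1) mod length vs)))"

definition lucas :: "nat \<Rightarrow> nat" where
  "lucas n = fib (n - 1) + fib (n + 1)"

end

theory Submission
  imports Defs "HOL-Number_Theory.Cong"
begin


fun pp :: "(nat \<Rightarrow> nat) \<Rightarrow> nat \<Rightarrow> bool list \<Rightarrow> nat" where
  "pp g i [] = g i"
| "pp g 0 (True # w) = pp g 0 w + pp g 1 w"
| "pp g 0 (False # w) = pp g 2 w"
| "pp g (Suc i) (x # w) = pp g i w"

definition g01 :: "nat \<Rightarrow> nat" where "g01 j = (if j \<le> 1 then 1 else 0)"
definition bb :: "bool list \<Rightarrow> nat" where "bb w = pp g01 0 w"

lemma pp1: "pp g01 1 w = bb (tl w)"
  by (cases w) (auto simp: bb_def g01_def)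

lemma bb_Nil: "bb [] = 1" by (simp add: bb_def g01_def)
lemma bb_True: "bb (True # r) = bb r + bb (tl r)"
  using pp1 by (simp add: bb_def numeral_eq_Suc One_nat_def)
lemma bb_F1: "bb [False] = 0" by (simp add: bb_def g01_def numeral_2_eq_2)
lemma bb_F2: "bb (False # x # r) = bb (tl r)"
  using pp1 by (simp add: bb_def numeral_2_eq_2 One_nat_def)

lemma pp_append: "pp g i (w @ v) = pp (\<lambda>j. pp g j v) i w"
proof (induction w arbitrary: i)
  case Nil then show ?case by simp
next
  case (Cons x w) then show ?case
    by (cases i; cases x) auto
qed

lemma pp_cong: "(\<And>j. j < 3 \<Longrightarrow> g j = g' j) \<Longrightarrow> i < 3 \<Longrightarrow> pp g i w = pp g' i w"
proof (induction w arbitrary: i)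
  case Nil then show ?case by simp
next
  case (Cons x w) then show ?case
    by (cases i; cases x) (auto simp: less_Suc_eq numeral_3_eq_3)
qed

lemma pp_zero: "pp (\<lambda>_. 0) i w = 0"
proof (induction w arbitrary: i)
  case (Cons x w) then show ?case by (cases i; cases x) auto
qed simp

definition delta :: "nat \<Rightarrow> nat \<Rightarrow> nat" where "delta c j = (if j = c then 1 else 0)"

lemma pp_linear: "i < 3 \<Longrightarrow> pp g i w = (\<Sum>c<3. g c * pp (delta c) i w)"
proof (induction w arbitrary: i)
  case Nil then show ?case
    by (auto simp: delta_def numeral_3_eq_3 lessThan_Suc less_Suc_eq)
next
  case (Cons x w) then show ?case
    by (cases i; cases x) (auto simp: less_Suc_eq numeral_3_eq_3 sum.distrib algebra_simps)
qed

lemma pp_delta2: "v = [] \<or> last v \<Longrightarrow> i < 2 \<Longrightarrow> pp (delta 2) i v = 0"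
proof (cases "v = []")
  case True
  assume "i < 2" then show ?thesis using True by (simp add: delta_def)
next
  case False
  assume a: "v = [] \<or> last v" "i < 2"
  then obtain u where u: "v = u @ [True]" using False
    by (metis append_butlast_last_id)
  have "pp (delta 2) i v = pp (\<lambda>j. pp (delta 2) j [True]) i u" by (simp add: u pp_append)
  also have "\<dots> = pp (\<lambda>_. 0) i u"
    by (rule pp_cong) (use a in \<open>auto simp: delta_def less_Suc_eq numeral_3_eq_3\<close>)
  finally show ?thesis by (simp add: pp_zero)
qed

lemma pp_FFF: "c < 3 \<Longrightarrow> pp g c (False # False # False # w) = pp g c w"
  by (auto simp: less_Suc_eq numeral_3_eq_3 numeral_2_eq_2)

lemma pp_rep3: "c < 3 \<Longrightarrow> pp g c (replicate j False @ w) = pp g c (replicate (j mod 3) False @ w)"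
proof (induction j rule: less_induct)
  case (less j)
  show ?case
  proof (cases "j < 3")
    case True then show ?thesis by simp
  next
    case False
    then obtain j' where j: "j = Suc (Suc (Suc j'))" by (metis less_Suc_eq numeral_3_eq_3 not0_implies_Suc not_less0 lessI)
    have r: "replicate j False @ w = False # False # False # (replicate j' False @ w)" by (simp add: j)
    have "pp g c (replicate j False @ w) = pp g c (replicate j' False @ w)"
      unfolding r by (rule pp_FFF[OF less.prems])
    also have "\<dots> = pp g c (replicate (j' mod 3) False @ w)"
    proof -
      have "j' < j" using j by simp
      then show ?thesis using less.IH less.prems by blast
    qed
    also have "j' mod 3 = j mod 3"
    proof -
      have "j = j' + 3" using j by simp
      then show ?thesis by simp
    qed
    finally show ?thesis .
  qed
qed

type_synonym m2 = "bool \<Rightarrow> bool \<Rightarrow> nat"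
definition mm :: "m2 \<Rightarrow> m2 \<Rightarrow> m2" where
  "mm X Y a b = X a False * Y False b + X a True * Y True b"
definition mle :: "m2 \<Rightarrow> m2 \<Rightarrow> bool" where "mle X Y = (\<forall>a b. X a b \<le> Y a b)"
definition Im :: m2 where "Im a b = (if a = b then 1 else 0)"
definition Jm :: m2 where "Jm a b = (if a = b then 0 else 1)"
definition T0m :: m2 where "T0m a b = (if a \<and> b then 0 else 1)"
definition T1m :: m2 where "T1m a b = (if \<not> a \<and> \<not> b then 0 else 1)"
fun Tp :: "nat \<Rightarrow> m2" where "Tp 0 = Im" | "Tp (Suc k) = mm (Tp k) T0m"
definition Jp :: "bool \<Rightarrow> m2" where "Jp e = (if e then Jm else Im)"
definition Bd :: "bool \<Rightarrow> nat \<Rightarrow> bool \<Rightarrow> m2" where "Bd e k f = mm (mm (Jp e) (Tp k)) (Jp f)"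
definition tr :: "m2 \<Rightarrow> nat" where "tr X = X False False + X True True"

lemma mm_assoc: "mm (mm X Y) Z = mm X (mm Y Z)"
  by (rule ext)+ (simp add: mm_def algebra_simps)
lemma mm_Im1[simp]: "mm Im X = X" by (rule ext)+ (simp add: mm_def Im_def)
lemma mm_Im2[simp]: "mm X Im = X" by (rule ext)+ (simp add: mm_def Im_def)
lemma mm_JJ: "mm Jm Jm = Im" by (rule ext)+ (simp add: mm_def Im_def Jm_def)
lemma T1_eq: "T1m = mm (mm Jm T0m) Jm" by (rule ext)+ (simp add: mm_def T0m_def T1m_def Jm_def)
lemma TJT: "mle (mm (mm T0m Jm) T0m) (mm T0m T0m)" by (simp add: mle_def mm_def T0m_def Jm_def)
lemma mle_refl: "mle X X" by (simp add: mle_def)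
lemma mle_mm: "mle X X' \<Longrightarrow> mle Y Y' \<Longrightarrow> mle (mm X Y) (mm X' Y')"
  by (simp add: mle_def mm_def add_mono mult_mono)
lemma mle_trans:
  assumes "mle X Y" "mle Y Z" shows "mle X Z"
  unfolding mle_def
proof (intro allI)
  fix a b
  have "X a b \<le> Y a b" "Y a b \<le> Z a b" using assms by (simp_all add: mle_def)
  then show "X a b \<le> Z a b" by (rule le_trans)
qed
lemma Jp_J2: "mm (Jp e) (mm Jm X) = mm (Jp (\<not> e)) X"
  by (cases e) (simp_all add: Jp_def mm_assoc[symmetric] mm_JJ)
lemma Jp_simps[simp]: "Jp False = Im" "Jp True = Jm" by (simp_all add: Jp_def)

lemma Bd_step:
  assumes "Q = T0m \<or> Q = T1m \<or> Q = Im"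
  shows "\<exists>e' k' f'. k' \<le> Suc k \<and> mle (mm (Bd e k f) Q) (Bd e' k' f')"
proof -
  consider "Q = Im" | "Q = T0m" | "Q = T1m" using assms by blast
  then show ?thesis
  proof cases
    case 1 then show ?thesis by (intro exI[of _ e] exI[of _ k] exI[of _ f]) (simp add: mle_refl)
  next
    case 2
    show ?thesis
    proof (cases f)
      case False
      then show ?thesis using 2
        by (intro exI[of _ e] exI[of _ "Suc k"] exI[of _ False]) (simp add: Bd_def mm_assoc mle_refl)
    next
      case True
      show ?thesis
      proof (cases k)
        case 0
        then show ?thesis using 2 True
          by (intro exI[of _ "\<not>e"] exI[of _ 1] exI[of _ False])
             (simp add: Bd_def mm_assoc Jp_J2 mle_refl)
      next
        case (Suc k0)
        have "mm (Bd e k f) Q = mm (Jp e) (mm (Tp k0) (mm (mm T0m Jm) T0m))"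
          using 2 True Suc by (simp add: Bd_def mm_assoc)
        moreover have "mle \<dots> (mm (Jp e) (mm (Tp k0) (mm T0m T0m)))"
          by (intro mle_mm mle_refl TJT)
        moreover have "mm (Jp e) (mm (Tp k0) (mm T0m T0m)) = Bd e (Suc (Suc k0)) False"
          by (simp add: Bd_def mm_assoc)
        ultimately show ?thesis using Suc by (intro exI[of _ e] exI[of _ "Suc (Suc k0)"] exI[of _ False]) auto
      qed
    qed
  next
    case 3
    show ?thesis
    proof (cases f)
      case True
      have "mm (Bd e k f) Q = mm (mm (Jp e) (Tp k)) (mm (mm Jm Jm) (mm T0m Jm))"
        using 3 True by (simp add: Bd_def T1_eq mm_assoc)
      also have "\<dots> = Bd e (Suc k) True" by (simp add: mm_JJ Bd_def mm_assoc)
      finally show ?thesis by (metis mle_refl order_refl)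
    next
      case False
      show ?thesis
      proof (cases k)
        case 0
        then show ?thesis using 3 False
          by (intro exI[of _ "\<not>e"] exI[of _ 1] exI[of _ True])
             (simp add: Bd_def mm_assoc T1_eq Jp_J2 mle_refl)
      next
        case (Suc k0)
        have "mm (Bd e k f) Q = mm (Jp e) (mm (mm (Tp k0) (mm (mm T0m Jm) T0m)) Jm)"
          using 3 False Suc by (simp add: Bd_def mm_assoc T1_eq)
        moreover have "mle \<dots> (mm (Jp e) (mm (mm (Tp k0) (mm T0m T0m)) Jm))"
          by (intro mle_mm mle_refl TJT)
        moreover have "mm (Jp e) (mm (mm (Tp k0) (mm T0m T0m)) Jm) = Bd e (Suc (Suc k0)) True"
          by (simp add: Bd_def mm_assoc)
        ultimately show ?thesis using Suc by (intro exI[of _ e] exI[of _ "Suc (Suc k0)"] exI[of _ True]) auto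
      qed
    qed
  qed
qed

definition fm :: "nat \<Rightarrow> nat" where "fm k = (if k = 0 then 1 else fib (k - 1))"

lemma Tp_entries: "Tp k False False = fib (Suc k) \<and> Tp k False True = fib k \<and> Tp k True False = fib k \<and> Tp k True True = fm k"
proof (induction k)
  case 0 then show ?case by (simp add: Im_def fm_def)
next
  case (Suc k) then show ?case
    by (cases k) (auto simp: mm_def T0m_def fm_def)
qed

lemma Bd_entry: "Bd e k f a b = Tp k (a \<noteq> e) (b \<noteq> f)"
  by (cases e; cases f) (simp_all add: Bd_def mm_def Im_def Jm_def)

lemma tr_Bd: "tr (Bd e k f) = (if e = f then fib (Suc k) + fm k else 2 * fib k)"
  using Tp_entries[of k] by (cases e; cases f) (simp_all add: tr_def Bd_entry)

definition idx :: "bool \<Rightarrow> nat" where "idx b = (if b then 1 else 0)"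
definition RR :: "bool list \<Rightarrow> m2" where "RR v a b = pp (delta (idx b)) (idx a) v"

lemma RR_Nil: "RR [] = Im" by (rule ext)+ (simp add: RR_def delta_def idx_def Im_def)

lemma RR_append:
  assumes "v = [] \<or> last v"
  shows "RR (v @ w) = mm (RR v) (\<lambda>c b. pp (delta (idx b)) (idx c) w)"
proof (rule ext)+
  fix a b
  have ia: "idx a < 3" "idx a < 2" by (auto simp: idx_def)
  have "RR (v @ w) a b = pp (\<lambda>j. pp (delta (idx b)) j w) (idx a) v"
    by (simp add: RR_def pp_append)
  also have "\<dots> = (\<Sum>c<3. pp (delta (idx b)) c w * pp (delta c) (idx a) v)"
    by (rule pp_linear) (rule ia)
  also have "\<dots> = pp (delta (idx b)) 0 w * pp (delta 0) (idx a) v + pp (delta (idx b)) 1 w * pp (delta 1) (idx a) v"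
    using pp_delta2[OF assms ia(2)] by (simp add: numeral_3_eq_3 numeral_2_eq_2)
  also have "\<dots> = mm (RR v) (\<lambda>c b. pp (delta (idx b)) (idx c) w) a b"
    by (simp add: mm_def RR_def idx_def)
  finally show "RR (v @ w) a b = mm (RR v) (\<lambda>c b. pp (delta (idx b)) (idx c) w) a b" .
qed

lemma block_mat: "(\<lambda>c b. pp (delta (idx b)) (idx c) (replicate j False @ [True])) = T0m
   \<or> (\<lambda>c b. pp (delta (idx b)) (idx c) (replicate j False @ [True])) = T1m
   \<or> (\<lambda>c b. pp (delta (idx b)) (idx c) (replicate j False @ [True])) = Im"
proof -
  have i3: "idx c < 3" for c by (simp add: idx_def)
  have eq: "(\<lambda>c b. pp (delta (idx b)) (idx c) (replicate j False @ [True])) =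
        (\<lambda>c b. pp (delta (idx b)) (idx c) (replicate (j mod 3) False @ [True]))"
    by (intro ext pp_rep3 i3)
  have bm0: "(\<lambda>c b. pp (delta (idx b)) (idx c) [True]) = T0m"
    by (intro ext) (auto simp: T0m_def idx_def delta_def)
  have bm1: "(\<lambda>c b. pp (delta (idx b)) (idx c) [False, True]) = T1m"
    by (intro ext) (auto simp: T1m_def idx_def delta_def numeral_2_eq_2)
  have bm2: "(\<lambda>c b. pp (delta (idx b)) (idx c) [False, False, True]) = Im"
    by (intro ext) (auto simp: Im_def idx_def delta_def numeral_2_eq_2)
  have "j mod 3 = 0 \<or> j mod 3 = 1 \<or> j mod 3 = 2" by arith
  then show ?thesis
  proof (elim disjE)
    assume "j mod 3 = 0" then show ?thesis using bm0 eq by simp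
  next
    assume "j mod 3 = 1" then show ?thesis using bm1 eq by simp
  next
    assume "j mod 3 = 2" then show ?thesis using bm2 eq by (simp add: numeral_2_eq_2)
  qed
qed

lemma split_trailing: "\<exists>v j. u = v @ replicate j False \<and> (v = [] \<or> last v)"
proof (induction u rule: rev_induct)
  case Nil then show ?case by simp
next
  case (snoc x u)
  then obtain v j where vj: "u = v @ replicate j False" "v = [] \<or> last v" by blast
  show ?case
  proof (cases x)
    case True then show ?thesis by (intro exI[of _ "u @ [x]"] exI[of _ 0]) simp
  next
    case False then show ?thesis using vj
      by (intro exI[of _ v] exI[of _ "Suc j"]) (simp add: replicate_append_same[symmetric])
  qed
qed

lemma domination: "v = [] \<or> last v \<Longrightarrow> \<exists>ee kk ff. kk \<le> length (filter id v) \<and> mle (RR v) (Bd ee kk ff)"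
proof (induction "length v" arbitrary: v rule: less_induct)
  case less
  show ?case
  proof (cases "v = []")
    case True then show ?thesis
      by (intro exI[of _ False] exI[of _ 0] exI[of _ False]) (simp add: RR_Nil Bd_def mle_refl)
  next
    case False
    then obtain u where u: "v = u @ [True]" using less.prems by (metis append_butlast_last_id)
    obtain v' j where vj: "u = v' @ replicate j False" "v' = [] \<or> last v'" using split_trailing by blast
    have lv: "length v' < length v" using u vj by simp
    obtain e k f where ekf: "k \<le> length (filter id v')" "mle (RR v') (Bd e k f)"
      using less.hyps[OF lv vj(2)] by blast
    define Q where "Q = (\<lambda>c b. pp (delta (idx b)) (idx c) (replicate j False @ [True]))"
    have RRv: "RR v = mm (RR v') Q" unfolding Q_def using RR_append[OF vj(2)] u vj by simp
    have m1: "mle (RR v) (mm (Bd e k f) Q)" unfolding RRv by (intro mle_mm ekf mle_refl)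
    obtain e' k' f' where k': "k' \<le> Suc k" and m2: "mle (mm (Bd e k f) Q) (Bd e' k' f')"
      using Bd_step[where Q=Q and e=e and k=k and f=f] block_mat[of j] unfolding Q_def by blast
    have "length (filter id v) = Suc (length (filter id v'))" using u vj by simp
    then have "k' \<le> length (filter id v)" using k' ekf(1) by linarith
    moreover have "mle (RR v) (Bd e' k' f')" by (rule mle_trans[OF m1 m2])
    ultimately show ?thesis by blast
  qed
qed

lemma cycle_value:
  assumes "length t \<ge> 2"
  shows "bb t + bb (butlast (tl t)) = tr (RR (t @ [True]))"
proof -
  have "RR (t @ [True]) False False = pp (\<lambda>j. pp (delta 0) j [True]) 0 t"
    by (simp add: RR_def idx_def pp_append)
  also have "\<dots> = bb t" unfolding bb_def
    by (rule pp_cong) (auto simp: delta_def g01_def less_Suc_eq numeral_3_eq_3)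
  finally have 1: "RR (t @ [True]) False False = bb t" .
  obtain x t' where t: "t = x # t'" using assms by (cases t) auto
  obtain u y where t': "t' = u @ [y]" using assms t by (cases t' rule: rev_cases) auto
  define h where "h = (\<lambda>j. pp (delta 1) j [True])"
  have "RR (t @ [True]) True True = pp h 1 t"
    by (simp add: RR_def idx_def pp_append h_def)
  also have "\<dots> = pp (\<lambda>j. pp h j [y]) 0 u" by (simp add: t t' pp_append)
  also have "\<dots> = bb u" unfolding bb_def
    by (rule pp_cong) (cases y; auto simp: h_def delta_def g01_def less_Suc_eq numeral_3_eq_3 numeral_2_eq_2)+
  finally have 2: "RR (t @ [True]) True True = bb (butlast (tl t))" by (simp add: t t')
  show ?thesis using 1 2 by (simp add: tr_def)
qed

lemma lucas_mono: "1 \<le> a \<Longrightarrow> a \<le> b \<Longrightarrow> lucas a \<le> lucas b"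
  unfolding lucas_def by (intro add_mono fib_mono) auto

lemma lucas_ge3: "2 \<le> K \<Longrightarrow> 3 \<le> lucas K"
  using lucas_mono[of 2 K] by (simp add: lucas_def numeral_3_eq_3 numeral_2_eq_2)

lemma tr_Bd_le: "k \<le> K \<Longrightarrow> 2 \<le> K \<Longrightarrow> tr (Bd e k f) \<le> lucas K"
proof -
  assume kK: "k \<le> K" and K2: "2 \<le> K"
  have a: "fib (Suc k) + fm k \<le> lucas K"
  proof (cases k)
    case 0 then show ?thesis using lucas_ge3[OF K2] by (simp add: fm_def)
  next
    case (Suc k0)
    have "fib (Suc k) + fm k = lucas k" by (simp add: Suc fm_def lucas_def)
    also have "\<dots> \<le> lucas K" using Suc kK by (intro lucas_mono) auto
    finally show ?thesis .
  qed
  have b: "2 * fib k \<le> lucas K"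
  proof -
    obtain K0 where K0: "K = Suc (Suc K0)" using K2 by (metis add_2_eq_Suc le_iff_add)
    have "fib k \<le> fib K" using kK by (rule fib_mono)
    moreover have "fib K = fib (Suc K0) + fib K0" by (simp add: K0)
    moreover have "fib K0 \<le> fib (Suc K0)" by (rule fib_Suc_mono)
    moreover have "lucas K = fib (Suc K0) + fib (Suc (Suc (Suc K0)))" by (simp add: K0 lucas_def)
    moreover have "fib (Suc (Suc (Suc K0))) = fib (Suc (Suc K0)) + fib (Suc K0)" by simp
    ultimately show ?thesis by (simp add: K0)
  qed
  show ?thesis using a b by (simp add: tr_Bd)
qed

lemma mle_tr: "mle X Y \<Longrightarrow> tr X \<le> tr Y" by (simp add: mle_def tr_def add_mono)

lemma cycle_bound_T:
  assumes "length t \<ge> 2" "length (filter id (True # t)) \<le> K" "2 \<le> K"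
  shows "bb t + bb (butlast (tl t)) \<le> lucas K"
proof -
  obtain e k f where ekf: "k \<le> length (filter id (t @ [True]))" "mle (RR (t @ [True])) (Bd e k f)"
    using domination[of "t @ [True]"] by auto
  have "k \<le> K" using ekf(1) assms(2) by simp
  then show ?thesis using cycle_value[OF assms(1)] mle_tr[OF ekf(2)] tr_Bd_le[OF _ assms(3)]
    by (metis le_trans)
qed

lemma bb_allF: "\<forall>x\<in>set w. \<not> x \<Longrightarrow> bb w \<le> 1"
proof (induction "length w" arbitrary: w rule: less_induct)
  case less
  show ?case
  proof (cases w)
    case Nil then show ?thesis by (simp add: bb_Nil)
  next
    case (Cons x r)
    then have x: "x = False" using less.prems by auto
    show ?thesis
    proof (cases r)
      case Nil then show ?thesis using Cons x by (simp add: bb_F1)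
    next
      case (Cons y r')
      have "bb w = bb (tl r')" using Cons \<open>w = x # r\<close> x by (simp add: bb_F2)
      also have "\<dots> \<le> 1"
      proof -
        have len: "length (tl r') < length w" using Cons \<open>w = x # r\<close> by simp
        have "set (tl r') \<subseteq> set w" using Cons \<open>w = x # r\<close> by (cases r') auto
        then have "\<forall>z\<in>set (tl r'). \<not> z" using less.prems by blast
        then show ?thesis using less.hyps[OF len] by blast
      qed
      finally show ?thesis .
    qed
  qed
qed



lemma finite_Ind: "finite W \<Longrightarrow> finite (Ind W E)"
  by (rule finite_subset[of _ "Pow W"]) (auto simp: Ind_def)

lemma acyclic_empty: "acyclic_matching P {}"
  by (auto simp: acyclic_matching_def is_matching_def is_cycle_def)

lemma cmin_le:
  assumes "finite W" "acyclic_matching (Ind W E) M"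
  shows "cmin W E \<le> card (critical (Ind W E) M)"
proof -
  have "{card (critical (Ind W E) M) | M. acyclic_matching (Ind W E) M} \<subseteq> {..card (Ind W E)}"
    using assms(1) by (auto intro!: card_mono finite_Ind simp: critical_def)
  then have "finite {card (critical (Ind W E) M) | M. acyclic_matching (Ind W E) M}"
    using finite_subset by blast
  then show ?thesis unfolding cmin_def using assms(2) by (intro Min_le) auto
qed

lemma cmin_ex:
  assumes "finite W"
  shows "\<exists>M. acyclic_matching (Ind W E) M \<and> cmin W E = card (critical (Ind W E) M)"
proof -
  have "{card (critical (Ind W E) M) | M. acyclic_matching (Ind W E) M} \<subseteq> {..card (Ind W E)}"
    using assms(1) by (auto intro!: card_mono finite_Ind simp: critical_def)
  then have "finite {card (critical (Ind W E) M) | M. acyclic_matching (Ind W E) M}"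
    using finite_subset by blast
  moreover have "{card (critical (Ind W E) M) | M. acyclic_matching (Ind W E) M} \<noteq> {}"
    using acyclic_empty by blast
  ultimately have "cmin W E \<in> {card (critical (Ind W E) M) | M. acyclic_matching (Ind W E) M}"
    unfolding cmin_def by (rule Min_in)
  then show ?thesis by auto
qed

lemma cyc_prop:
  assumes "n > 0" "\<And>j. j < n \<Longrightarrow> P j \<Longrightarrow> P (Suc j mod n)" "i < n" "P i" "j < n"
  shows "P j"
proof -
  have "P ((i + d) mod n)" for d
  proof (induction d)
    case 0 then show ?case using assms by simp
  next
    case (Suc d)
    have "P (Suc ((i + d) mod n) mod n)" using assms(1,2) Suc by simp
    then show ?case by (simp add: mod_Suc_eq)
  qed
  from this[of "j + n - i"] show ?thesis using assms by simp
qed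

lemma cyc_chain:
  fixes f :: "nat \<Rightarrow> 'b set"
  assumes "n > 0" "\<And>j. j < n \<Longrightarrow> f (Suc j mod n) \<subseteq> f j" "i < n"
  shows "f i = f 0"
proof -
  have sub: "f ((a + d) mod n) \<subseteq> f a" if "a < n" for a d
  proof (induction d)
    case 0 then show ?case using that by simp
  next
    case (Suc d)
    have "f (Suc ((a + d) mod n) mod n) \<subseteq> f ((a + d) mod n)" using assms(1,2) by simp
    then show ?case using Suc by (simp add: mod_Suc_eq)
  qed
  have "f ((i + (n - i)) mod n) \<subseteq> f i" using sub assms(3) by blast
  moreover have "f ((0 + i) mod n) \<subseteq> f 0" using sub assms(1) by blast
  ultimately show ?thesis using assms by auto
qed

lemma cone:
  assumes fin: "finite W" and v: "v \<in> W" and iso: "\<forall>y\<in>W. \<not> E v y"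
    and sym: "\<forall>x y. E x y \<longrightarrow> E y x"
  shows "cmin W E = 0"
proof -
  define M where "M = (\<lambda>S. (S, insert v S)) ` {S \<in> Ind W E. v \<notin> S}"
  have ins: "insert v S \<in> Ind W E" if "S \<in> Ind W E" for S
    using that v iso sym unfolding Ind_def by blast
  have finS: "finite S" if "S \<in> Ind W E" for S
    using that fin unfolding Ind_def by (auto intro: finite_subset)
  have match: "is_matching (Ind W E) M"
    unfolding is_matching_def
  proof (intro conjI ballI impI)
    fix p assume "p \<in> M"
    then obtain S where S: "p = (S, insert v S)" "S \<in> Ind W E" "v \<notin> S" by (auto simp: M_def)
    show "case p of (s, t) \<Rightarrow> s \<in> Ind W E \<and> t \<in> Ind W E \<and> s \<subset> t \<and> card t = card s + 1"
      using S ins finS by auto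
  next
    fix p q assume "p \<in> M" "q \<in> M" "p \<noteq> q"
    then obtain S S' where "p = (S, insert v S)" "v \<notin> S" "q = (S', insert v S')" "v \<notin> S'" "S \<noteq> S'"
      by (auto simp: M_def)
    then show "{fst p, snd p} \<inter> {fst q, snd q} = {}"
      by auto
  qed
  have crit: "critical (Ind W E) M = {}"
  proof -
    have "False" if "S \<in> critical (Ind W E) M" for S
    proof (cases "v \<in> S")
      case True
      have "S - {v} \<in> Ind W E" using that by (auto simp: critical_def Ind_def)
      then have "(S - {v}, S) \<in> M" using True unfolding M_def
        by (auto intro!: image_eqI[of _ _ "S - {v}"])
      then show False using that by (auto simp: critical_def)
    next
      case False
      then have "(S, insert v S) \<in> M" using that unfolding M_def critical_def by auto
      then show False using that by (auto simp: critical_def)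
    qed
    then show ?thesis by blast
  qed
  have acyc: "\<nexists>ps. is_cycle M ps"
  proof
    assume "\<exists>ps. is_cycle M ps"
    then obtain ps where c: "is_cycle M ps" by blast
    define n where "n = length ps"
    have n1: "n > 1" using c by (simp add: is_cycle_def n_def)
    have inM: "ps ! j \<in> M" if "j < n" for j using c that by (auto simp: is_cycle_def n_def)
    have form: "snd (ps ! j) = insert v (fst (ps ! j)) \<and> v \<notin> fst (ps ! j)" if "j < n" for j
      using inM[OF that] by (auto simp: M_def)
    have "fst (ps ! (Suc j mod n)) \<subseteq> fst (ps ! j)" if "j < n" for j
    proof -
      have "snd (ps ! j) \<supset> fst (ps ! ((j + 1) mod n))" using c that by (simp add: is_cycle_def n_def)
      moreover have "Suc j mod n < n" using n1 by simp
      ultimately show ?thesis using form[OF that] form[of "Suc j mod n"] by auto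
    qed
    then have "fst (ps ! 1) = fst (ps ! 0)"
      using cyc_chain[of n "\<lambda>j. fst (ps ! j)" 1] n1 by auto
    then have "ps ! 1 = ps ! 0" using form[of 0] form[of 1] n1 by (simp add: prod_eq_iff)
    moreover have "distinct ps" using c by (simp add: is_cycle_def)
    ultimately show False using n1 n_def nth_eq_iff_index_eq[of ps 1 0] by (metis One_nat_def less_trans zero_less_one zero_neq_one)
  qed
  have "cmin W E \<le> card (critical (Ind W E) M)"
    by (rule cmin_le[OF fin]) (simp add: acyclic_matching_def match acyc)
  then show ?thesis by (simp add: crit)
qed

lemma split_vertex:
  assumes fin: "finite X" and v: "v \<in> X"
    and sym: "\<forall>x y. E x y \<longrightarrow> E y x" and irr: "\<forall>x. \<not> E x x"
  shows "cmin X E \<le> cmin (X - {v}) E + cmin (X - insert v {y. E v y}) E"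
proof -
  define N where "N = X - insert v {y. E v y}"
  obtain M1 where M1: "acyclic_matching (Ind (X - {v}) E) M1" "cmin (X - {v}) E = card (critical (Ind (X - {v}) E) M1)"
    using cmin_ex[of "X - {v}" E] fin by auto
  obtain M2 where M2: "acyclic_matching (Ind N E) M2" "cmin N E = card (critical (Ind N E) M2)"
    using cmin_ex[of N E] fin by (auto simp: N_def)
  define f where "f = (\<lambda>(s::'a set, t::'a set). (insert v s, insert v t))"
  define M where "M = M1 \<union> f ` M2"
  have I1: "S \<in> Ind X E \<and> v \<notin> S" if "S \<in> Ind (X - {v}) E" for S
    using that by (auto simp: Ind_def)
  have I2: "insert v S \<in> Ind X E \<and> v \<notin> S" if "S \<in> Ind N E" for S
    using that v sym irr by (auto simp: Ind_def N_def)
  have I3: "S - {v} \<in> Ind N E" if "S \<in> Ind X E" "v \<in> S" for S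
    using that sym by (auto simp: Ind_def N_def)
  have I4: "S \<in> Ind (X - {v}) E" if "S \<in> Ind X E" "v \<notin> S" for S
    using that by (auto simp: Ind_def)
  have finI: "finite S" if "S \<in> Ind X E" for S
    using that fin unfolding Ind_def by (auto intro: finite_subset)
  have m1: "is_matching (Ind (X - {v}) E) M1" and m2: "is_matching (Ind N E) M2"
    using M1 M2 by (auto simp: acyclic_matching_def)
  have M1p: "fst p \<in> Ind (X - {v}) E \<and> snd p \<in> Ind (X - {v}) E \<and> fst p \<subset> snd p \<and> card (snd p) = card (fst p) + 1"
    if "p \<in> M1" for p
  proof -
    have "case p of (s, t) \<Rightarrow> s \<in> Ind (X - {v}) E \<and> t \<in> Ind (X - {v}) E \<and> s \<subset> t \<and> card t = card s + 1"
      using m1 that unfolding is_matching_def by blast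
    then show ?thesis by (cases p) simp
  qed
  have M2p: "fst p \<in> Ind N E \<and> snd p \<in> Ind N E \<and> fst p \<subset> snd p \<and> card (snd p) = card (fst p) + 1"
    if "p \<in> M2" for p
  proof -
    have "case p of (s, t) \<Rightarrow> s \<in> Ind N E \<and> t \<in> Ind N E \<and> s \<subset> t \<and> card t = card s + 1"
      using m2 that unfolding is_matching_def by blast
    then show ?thesis by (cases p) simp
  qed
  have M1d: "{fst p, snd p} \<inter> {fst q, snd q} = {}" if "p \<in> M1" "q \<in> M1" "p \<noteq> q" for p q
    using m1 that unfolding is_matching_def by auto
  have M2d: "{fst p, snd p} \<inter> {fst q, snd q} = {}" if "p \<in> M2" "q \<in> M2" "p \<noteq> q" for p q
    using m2 that unfolding is_matching_def by auto
  have fp: "fst (f p) = insert v (fst p)" "snd (f p) = insert v (snd p)" for p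
    by (auto simp: f_def split: prod.splits)
  have Mp: "fst p \<in> Ind X E \<and> snd p \<in> Ind X E \<and> fst p \<subset> snd p \<and> card (snd p) = card (fst p) + 1"
    if pM: "p \<in> M" for p
  proof (cases "p \<in> M1")
    case True then show ?thesis using M1p I1 by blast
  next
    case False
    then obtain q where q: "q \<in> M2" "p = f q" using pM by (auto simp: M_def)
    have a: "v \<notin> fst q" "v \<notin> snd q" using M2p[OF q(1)] I2 by blast+
    have q2: "fst q \<in> Ind N E" "snd q \<in> Ind N E" "fst q \<subset> snd q" "card (snd q) = card (fst q) + 1"
      using M2p[OF q(1)] by auto
    have i1: "insert v (fst q) \<in> Ind X E" using I2[OF q2(1)] by simp
    have i2: "insert v (snd q) \<in> Ind X E" using I2[OF q2(2)] by simp
    have fs: "finite (snd q)" using finI[OF i2] by simp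
    have ff: "finite (fst q)" using q2(3) fs finite_subset by blast
    have sub: "insert v (fst q) \<subset> insert v (snd q)" using q2(3) a by auto
    have cd: "card (insert v (snd q)) = card (insert v (fst q)) + 1" using q2(4) a fs ff by simp
    show ?thesis using i1 i2 sub cd q(2) fp by simp
  qed
  have match: "is_matching (Ind X E) M"
    unfolding is_matching_def
  proof (intro conjI ballI impI)
    fix p assume "p \<in> M"
    then show "case p of (s, t) \<Rightarrow> s \<in> Ind X E \<and> t \<in> Ind X E \<and> s \<subset> t \<and> card t = card s + 1"
      using Mp[OF \<open>p \<in> M\<close>] by (cases p) simp
  next
    fix p q assume pq: "p \<in> M" "q \<in> M" "p \<noteq> q"
    show "{fst p, snd p} \<inter> {fst q, snd q} = {}"
    proof (cases "p \<in> M1"; cases "q \<in> M1")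
      assume "p \<in> M1" "q \<in> M1" then show ?thesis using M1d pq by blast
    next
      assume "p \<in> M1" "q \<notin> M1"
      then obtain q' where "q' \<in> M2" "q = f q'" using pq by (auto simp: M_def)
      moreover have "v \<notin> fst p" "v \<notin> snd p" using M1p[OF \<open>p \<in> M1\<close>] I1 by blast+
      ultimately show ?thesis using fp by auto
    next
      assume "p \<notin> M1" "q \<in> M1"
      then obtain p' where "p' \<in> M2" "p = f p'" using pq by (auto simp: M_def)
      moreover have "v \<notin> fst q" "v \<notin> snd q" using M1p[OF \<open>q \<in> M1\<close>] I1 by blast+
      ultimately show ?thesis using fp by auto
    next
      assume "p \<notin> M1" "q \<notin> M1"
      then obtain p' q' where pq': "p' \<in> M2" "p = f p'" "q' \<in> M2" "q = f q'" using pq by (auto simp: M_def)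
      then have "p' \<noteq> q'" using pq by auto
      then have d: "{fst p', snd p'} \<inter> {fst q', snd q'} = {}" using M2d pq' by blast
      have nv: "v \<notin> fst p'" "v \<notin> snd p'" "v \<notin> fst q'" "v \<notin> snd q'"
        using M2p[OF pq'(1)] M2p[OF pq'(3)] I2 by blast+
      have ne: "A \<noteq> B \<Longrightarrow> v \<notin> A \<Longrightarrow> v \<notin> B \<Longrightarrow> insert v A \<noteq> insert v B" for A B
        by (metis Diff_insert_absorb)
      have n4: "fst p' \<noteq> fst q'" "fst p' \<noteq> snd q'" "snd p' \<noteq> fst q'" "snd p' \<noteq> snd q'"
        using d by auto
      have "insert v (fst p') \<noteq> insert v (fst q')" "insert v (fst p') \<noteq> insert v (snd q')"
           "insert v (snd p') \<noteq> insert v (fst q')" "insert v (snd p') \<noteq> insert v (snd q')"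
        using ne n4 nv by blast+
      then show ?thesis using pq'(2,4) fp by simp
    qed
  qed
  have crit: "critical (Ind X E) M \<subseteq> critical (Ind (X - {v}) E) M1 \<union> insert v ` critical (Ind N E) M2"
  proof
    fix S assume S: "S \<in> critical (Ind X E) M"
    then have SI: "S \<in> Ind X E" and Sc: "\<forall>p\<in>M. S \<noteq> fst p \<and> S \<noteq> snd p" by (auto simp: critical_def)
    show "S \<in> critical (Ind (X - {v}) E) M1 \<union> insert v ` critical (Ind N E) M2"
    proof (cases "v \<in> S")
      case False
      then show ?thesis using I4[OF SI] Sc by (auto simp: critical_def M_def)
    next
      case True
      have "S - {v} \<in> critical (Ind N E) M2"
      proof -
        have "S - {v} \<noteq> fst p \<and> S - {v} \<noteq> snd p" if "p \<in> M2" for p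
        proof -
          have "f p \<in> M" using that by (simp add: M_def)
          then have "S \<noteq> insert v (fst p) \<and> S \<noteq> insert v (snd p)" using Sc fp by metis
          then show ?thesis using True by auto
        qed
        then show ?thesis using I3[OF SI True] by (simp add: critical_def)
      qed
      moreover have "S = insert v (S - {v})" using True by auto
      ultimately show ?thesis by blast
    qed
  qed
  have acyc: "\<nexists>ps. is_cycle M ps"
  proof
    assume "\<exists>ps. is_cycle M ps"
    then obtain ps where c: "is_cycle M ps" by blast
    define n where "n = length ps"
    have n1: "n > 1" using c by (simp add: is_cycle_def n_def)
    have inM: "ps ! j \<in> M" if "j < n" for j using c that by (auto simp: is_cycle_def n_def)
    have succ: "snd (ps ! j) \<supset> fst (ps ! (Suc j mod n))" if "j < n" for j
      using c that by (simp add: is_cycle_def n_def)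
    have tp: "(ps ! j \<in> M1 \<and> v \<notin> fst (ps ! j) \<and> v \<notin> snd (ps ! j)) \<or>
               (\<exists>q\<in>M2. ps ! j = f q \<and> v \<in> fst (ps ! j) \<and> v \<in> snd (ps ! j))" if "j < n" for j
    proof -
      have "ps ! j \<in> M1 \<or> (\<exists>q\<in>M2. ps ! j = f q)" using inM[OF that] by (auto simp: M_def)
      then show ?thesis
      proof
        assume a: "ps ! j \<in> M1"
        then have "v \<notin> fst (ps ! j)" "v \<notin> snd (ps ! j)" using M1p[OF a] I1 by blast+
        then show ?thesis using a by blast
      next
        assume "\<exists>q\<in>M2. ps ! j = f q"
        then obtain q where "q \<in> M2" "ps ! j = f q" by blast
        then show ?thesis using fp by auto
      qed
    qed
    show False
    proof (cases "\<exists>i<n. v \<notin> fst (ps ! i)")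
      case True
      then obtain i where i: "i < n" "v \<notin> fst (ps ! i)" by blast
      have all: "v \<notin> fst (ps ! j)" if "j < n" for j
      proof (rule cyc_prop[of n "\<lambda>j. v \<notin> fst (ps ! j)" i])
        fix j assume j: "j < n" "v \<notin> fst (ps ! j)"
        then have "v \<notin> snd (ps ! j)" using tp[OF j(1)] by auto
        then show "v \<notin> fst (ps ! (Suc j mod n))" using succ[OF j(1)] by auto
      qed (use n1 i that in auto)
      have "is_cycle M1 ps"
      proof -
        have "ps ! j \<in> M1" if "j < n" for j using tp[OF that] all[OF that] by auto
        then have "set ps \<subseteq> M1" unfolding n_def by (metis in_set_conv_nth subsetI)
        then show ?thesis using c by (simp add: is_cycle_def)
      qed
      then show False using M1 by (auto simp: acyclic_matching_def)
    next
      case False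
      then have allf: "\<exists>q\<in>M2. ps ! j = f q" if "j < n" for j using tp[OF that] that by auto
      define g where "g = (\<lambda>(s::'a set, t::'a set). (s - {v}, t - {v}))"
      have gfs: "g p = (fst p - {v}, snd p - {v})" for p by (cases p) (simp add: g_def)
      have gf: "g (f q) = q" if "q \<in> M2" for q
      proof -
        have "v \<notin> fst q" "v \<notin> snd q" using M2p[OF that] I2 by blast+
        then show ?thesis by (cases q) (auto simp: f_def g_def)
      qed
      have "is_cycle M2 (map g ps)"
        unfolding is_cycle_def
      proof (intro conjI allI impI)
        show "1 < length (map g ps)" using n1 by (simp add: n_def)
        have "inj_on g (set ps)"
        proof (rule inj_onI)
          fix x y assume "x \<in> set ps" "y \<in> set ps" "g x = g y"
          then obtain i j where "i < n" "j < n" "x = ps ! i" "y = ps ! j" by (auto simp: in_set_conv_nth n_def)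
          then obtain qx qy where "qx \<in> M2" "x = f qx" "qy \<in> M2" "y = f qy" using allf by metis
          then show "x = y" using gf \<open>g x = g y\<close> by metis
        qed
        then show "distinct (map g ps)" using c by (simp add: distinct_map is_cycle_def)
        show "set (map g ps) \<subseteq> M2"
        proof
          fix x assume "x \<in> set (map g ps)"
          then obtain i where "i < n" "x = g (ps ! i)" by (auto simp: in_set_conv_nth n_def)
          then show "x \<in> M2" using allf gf by metis
        qed
      next
        fix i assume i: "i < length (map g ps)"
        then have i': "i < n" by (simp add: n_def)
        have s: "Suc i mod n < n" using n1 by simp
        have "v \<in> fst (ps ! (Suc i mod n))" using False s by auto
        moreover have "snd (ps ! i) \<supset> fst (ps ! (Suc i mod n))" using succ[OF i'] .
        ultimately have "snd (ps ! i) - {v} \<supset> fst (ps ! (Suc i mod n)) - {v}" by auto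
        then show "snd (map g ps ! i) \<supset> fst (map g ps ! ((i + 1) mod length (map g ps)))"
          using i' s by (simp add: gfs n_def)
      qed
      then show False using M2 by (auto simp: acyclic_matching_def)
    qed
  qed
  have "cmin X E \<le> card (critical (Ind X E) M)"
    by (rule cmin_le[OF fin]) (simp add: acyclic_matching_def match acyc)
  also have "\<dots> \<le> card (critical (Ind (X - {v}) E) M1 \<union> insert v ` critical (Ind N E) M2)"
  proof (rule card_mono[OF _ crit])
    have "finite (Ind (X - {v}) E)" "finite (Ind N E)" using fin by (auto intro: finite_Ind simp: N_def)
    then show "finite (critical (Ind (X - {v}) E) M1 \<union> insert v ` critical (Ind N E) M2)"
      by (auto simp: critical_def)
  qed
  also have "\<dots> \<le> card (critical (Ind (X - {v}) E) M1) + card (insert v ` critical (Ind N E) M2)"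
    by (rule card_Un_le)
  also have "\<dots> \<le> card (critical (Ind (X - {v}) E) M1) + card (critical (Ind N E) M2)"
  proof (intro add_left_mono card_image_le)
    show "finite (critical (Ind N E) M2)"
      by (rule finite_subset[OF _ finite_Ind[of N E]]) (auto simp: critical_def N_def fin)
  qed
  finally have calc: "cmin X E \<le> card (critical (Ind (X - {v}) E) M1) + card (critical (Ind N E) M2)" .
  show ?thesis unfolding N_def[symmetric] using calc M1(2) M2(2) by linarith
qed



definition consec :: "('a \<Rightarrow> 'a \<Rightarrow> bool) \<Rightarrow> 'a list \<Rightarrow> bool" where
  "consec E ps = (\<forall>l<length ps. \<forall>l'<length ps. E (ps!l) (ps!l') \<longleftrightarrow> (l' = Suc l \<or> l = Suc l'))"

lemma consec_drop: "consec E ps \<Longrightarrow> consec E (drop k ps)"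
  unfolding consec_def by auto

lemma consec_tl: "consec E ps \<Longrightarrow> consec E (tl ps)"
  using consec_drop[of E ps 1] by (simp add: drop_Suc)

lemma set_tl_distinct: "distinct (x # r) \<Longrightarrow> set r = set (x # r) - {x}"
  by auto

lemma path_bound:
  assumes sg: "simple_graph V E" and CV: "C \<subseteq> V"
    and hyp: "\<And>W'. W' \<subseteq> V - C \<Longrightarrow> real (cmin W' E) \<le> c"
  shows "W \<subseteq> V - C \<Longrightarrow> set ps \<subseteq> C \<Longrightarrow> distinct ps \<Longrightarrow> consec E ps \<Longrightarrow>
    real (cmin (W \<union> set ps) E) \<le> c * real (bb (map (\<lambda>x. \<exists>y\<in>V - C. E x y) ps))"
proof (induction "length ps" arbitrary: W ps rule: less_induct)
  case less
  define att where "att = (\<lambda>x. \<exists>y\<in>V - C. E x y)"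
  have finV: "finite V" and Ev: "\<And>x y. E x y \<Longrightarrow> x \<in> V \<and> y \<in> V"
    and sym: "\<forall>x y. E x y \<longrightarrow> E y x" and irr: "\<forall>x. \<not> E x x"
    using sg by (auto simp: simple_graph_def)
  have c0: "0 \<le> c" using hyp[of "{}"] by simp
  have finX: "finite (W \<union> set ps)" using less.prems CV finV by (meson finite_Un finite_subset List.finite_set Diff_subset order_trans)
  have IH: "real (cmin (W' \<union> set ps') E) \<le> c * real (bb (map att ps'))"
    if "length ps' < length ps" "W' \<subseteq> V - C" "set ps' \<subseteq> C" "distinct ps'" "consec E ps'" for W' ps'
    using less.hyps[OF that] unfolding att_def by simp
  have Wnb: "\<And>q y. q \<in> C \<Longrightarrow> y \<in> W \<Longrightarrow> E q y \<Longrightarrow> att q" using less.prems(1) unfolding att_def by blast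
  show ?case
  proof (cases ps)
    case Nil
    then show ?thesis using hyp[OF less.prems(1)] by (simp add: bb_Nil)
  next
    case (Cons q r)
    have qC: "q \<in> C" and qW: "q \<notin> W" and qr: "q \<notin> set r" and rC: "set r \<subseteq> C"
      using less.prems Cons by auto
    have dr: "distinct r" using less.prems Cons by simp
    have cr: "consec E r" using consec_tl[OF less.prems(4)] Cons by simp
    have nbq: "E q y \<Longrightarrow> y \<in> set r \<Longrightarrow> y = hd r" for y
    proof -
      assume "E q y" "y \<in> set r"
      then obtain l where l: "l < length r" "y = r ! l" by (auto simp: in_set_conv_nth)
      have "E (ps ! 0) (ps ! Suc l)" using Cons l \<open>E q y\<close> by simp
      then have "Suc l = 1" using less.prems(4) l Cons unfolding consec_def by force
      then show "y = hd r" using l by (cases r) auto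
    qed
    have nbq2: "r \<noteq> [] \<Longrightarrow> E q (hd r)"
      using less.prems(4) Cons unfolding consec_def by (cases r) force+
    have tlr: "set (tl r) = set r - {hd r}" if "r \<noteq> []" using dr that by (cases r) auto
    show ?thesis
    proof (cases "att q")
      case True
      have sp: "cmin (W \<union> set ps) E \<le> cmin (W \<union> set ps - {q}) E + cmin (W \<union> set ps - insert q {y. E q y}) E"
        using split_vertex[OF finX _ sym irr, of q] Cons by simp
      have e1: "W \<union> set ps - {q} = W \<union> set r" using Cons qW qr by auto
      have e2: "W \<union> set ps - insert q {y. E q y} = (W - {y. E q y}) \<union> set (tl r)"
      proof (cases "r = []")
        case True then show ?thesis using Cons qW by auto
      next
        case False
        show ?thesis using Cons qW qr tlr[OF False] nbq nbq2[OF False] by auto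
      qed
      have sp': "real (cmin (W \<union> set ps) E) \<le> real (cmin (W \<union> set r) E) + real (cmin ((W - {y. E q y}) \<union> set (tl r)) E)"
        using sp unfolding e1 e2 by linarith
      moreover have "real (cmin (W \<union> set r) E) \<le> c * real (bb (map att r))"
        by (rule IH[OF _ less.prems(1) rC dr cr]) (simp add: Cons)
      moreover have "real (cmin ((W - {y. E q y}) \<union> set (tl r)) E) \<le> c * real (bb (map att (tl r)))"
      proof (rule IH)
        show "length (tl r) < length ps" using Cons by simp
        show "W - {y. E q y} \<subseteq> V - C" using less.prems(1) by blast
        show "set (tl r) \<subseteq> C" using rC by (cases r) auto
        show "distinct (tl r)" using dr by (rule distinct_tl)
        show "consec E (tl r)" using cr by (rule consec_tl)
      qed
      ultimately have "real (cmin (W \<union> set ps) E) \<le> c * real (bb (map att r)) + c * real (bb (map att (tl r)))"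
        by linarith
      also have "\<dots> = c * real (bb (map att ps))"
        using Cons True by (simp add: bb_True map_tl distrib_left)
      finally show ?thesis by (simp add: att_def)
    next
      case False
      show ?thesis
      proof (cases r)
        case Nil
        have "cmin (W \<union> set ps) E = 0"
        proof (rule cone[OF finX _ _ sym])
          show "q \<in> W \<union> set ps" using Cons by simp
          show "\<forall>y\<in>W \<union> set ps. \<not> E q y" using Cons Nil False Wnb qC irr by auto
        qed
        then show ?thesis using Cons Nil False c0 by (simp add: att_def bb_F1)
      next
        case (Cons x r')
        have ps: "ps = q # x # r'" using Cons \<open>ps = q # r\<close> by simp
        have xC: "x \<in> C" and xW: "x \<notin> W" using less.prems ps by auto
        have dps: "distinct (q # x # r')" using less.prems ps by simp
        have cps: "consec E (q # x # r')" using less.prems ps by simp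
        have "cmin (W \<union> set ps) E \<le> cmin (W \<union> set ps - {x}) E + cmin (W \<union> set ps - insert x {y. E x y}) E"
          using split_vertex[OF finX _ sym irr, of x] ps by simp
        moreover have "cmin (W \<union> set ps - {x}) E = 0"
        proof (rule cone[OF _ _ _ sym])
          show "finite (W \<union> set ps - {x})" using finX by simp
          show "q \<in> W \<union> set ps - {x}" using ps dps by auto
          show "\<forall>y\<in>W \<union> set ps - {x}. \<not> E q y" using nbq False Wnb qC irr ps Cons by auto
        qed
        moreover have "W \<union> set ps - insert x {y. E x y} = (W - {y. E x y}) \<union> set (tl r')"
        proof -
          have "E x q" using nbq2 sym Cons by auto
          moreover have "r' \<noteq> [] \<Longrightarrow> E x (hd r')"
            using cps unfolding consec_def by (cases r') force+
          moreover have "E x y \<Longrightarrow> y \<in> set r' \<Longrightarrow> y = hd r'" for y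
          proof -
            assume "E x y" "y \<in> set r'"
            then obtain l where l: "l < length r'" "y = r' ! l" by (auto simp: in_set_conv_nth)
            have "E ((q # x # r') ! 1) ((q # x # r') ! Suc (Suc l))" using l \<open>E x y\<close> by simp
            then have "Suc (Suc l) = 2" using cps l unfolding consec_def by force
            then show "y = hd r'" using l by (cases r') auto
          qed
          ultimately have ex: "E x q" "r' \<noteq> [] \<Longrightarrow> E x (hd r')" "\<And>y. E x y \<Longrightarrow> y \<in> set r' \<Longrightarrow> y = hd r'"
            by blast+
          show ?thesis
          proof (cases r')
            case Nil
            have "x \<noteq> q" using dps by auto
            then show ?thesis using ps Nil xW qW ex(1) by auto
          next
            case (Cons h r'')
            have nr: "\<not> E x z" if "z \<in> set r''" for z
            proof
              assume "E x z"
              then have "z = h" using ex(3)[of z] that Cons by simp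
              then show False using that dps Cons by simp
            qed
            have exh: "E x h" using ex(2) Cons by simp
            have d: "x \<noteq> q" "x \<noteq> h" "x \<notin> set r''" using dps Cons by auto
            show ?thesis using ps Cons xW qW ex(1) exh nr d by auto
          qed
        qed
        moreover have "real (cmin ((W - {y. E x y}) \<union> set (tl r')) E) \<le> c * real (bb (map att (tl r')))"
        proof (rule IH)
          show "length (tl r') < length ps" using ps by simp
          show "W - {y. E x y} \<subseteq> V - C" using less.prems(1) by blast
          show "set (tl r') \<subseteq> C" using less.prems(2) ps by (cases r') auto
          show "distinct (tl r')" using dps by (cases r') auto
          show "consec E (tl r')" using consec_drop[OF cps, of 3] by (simp add: drop_Suc)
        qed
        ultimately have "real (cmin (W \<union> set ps) E) \<le> c * real (bb (map att (tl r')))"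
          by (metis (no_types, lifting) add_0 of_nat_le_iff order_trans)
        also have "\<dots> = c * real (bb (map att ps))"
          using ps False by (simp add: bb_F2 map_tl)
        finally show ?thesis by (simp add: att_def)
      qed
    qed
  qed
qed



lemma mod_add_cancel_nat: "((x::nat) + c) mod m = (y + c) mod m \<longleftrightarrow> x mod m = y mod m"
  using cong_add_rcancel_nat[of x c y m] unfolding cong_def by simp

lemma consec_butlast: "consec E ps \<Longrightarrow> consec E (butlast ps)"
  unfolding consec_def by (auto simp: nth_butlast)

theorem theorem3p4:
  fixes V C :: "'a set" and E :: "'a \<Rightarrow> 'a \<Rightarrow> bool" and n :: nat and c :: real
  assumes "simple_graph V E"
    and "induced_cycle V E C"
    and "n \<ge> 2"
    and "card {x \<in> C. \<exists>y \<in> V - C. E x y} \<le> n"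
    and "\<And>W. W \<subseteq> V - C \<Longrightarrow> real (cmin W E) \<le> c"
  shows "real (cmin V E) \<le> c * real (lucas n)"
proof -
  note sg = assms(1) and hyp = assms(5)
  define att where "att = (\<lambda>x. \<exists>y\<in>V - C. E x y)"
  have finV: "finite V" and sym: "\<forall>x y. E x y \<longrightarrow> E y x" and irr: "\<forall>x. \<not> E x x"
    using sg by (auto simp: simple_graph_def)
  have c0: "0 \<le> c" using hyp[of "{}"] by simp
  obtain vs where CV: "C \<subseteq> V" and vs: "distinct vs" "set vs = C" "length vs \<ge> 3"
    and adj: "\<forall>i < length vs. \<forall>j < length vs. E (vs ! i) (vs ! j) \<longleftrightarrow>
        (j = (i + 1) mod length vs \<or> i = (j + 1) mod length vs)"
    using assms(2) unfolding induced_cycle_def by blast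
  define m where "m = length vs"
  have m3: "m \<ge> 3" using vs by (simp add: m_def)
  define i0 where "i0 = (if \<exists>i<m. att (vs ! i) then (SOME i. i < m \<and> att (vs ! i)) else 0)"
  have i0m: "i0 < m" using m3 unfolding i0_def by (auto intro: someI2_ex)
  have i0att: "(\<exists>i<m. att (vs ! i)) \<Longrightarrow> att (vs ! i0)"
    unfolding i0_def by (auto intro: someI2_ex)
  define ws where "ws = rotate i0 vs"
  have ws: "distinct ws" "set ws = C" "length ws = m" using vs by (simp_all add: ws_def m_def)
  have wsn: "ws ! l = vs ! ((l + i0) mod m)" if "l < m" for l
    using that by (simp add: ws_def nth_rotate m_def add.commute)
  have adjw: "E (ws ! l) (ws ! l') \<longleftrightarrow> (l' = (l + 1) mod m \<or> l = (l' + 1) mod m)" if "l < m" "l' < m" for l l'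
  proof -
    have "E (ws ! l) (ws ! l') \<longleftrightarrow> ((l' + i0) mod m = ((l + i0) mod m + 1) mod m \<or> (l + i0) mod m = ((l' + i0) mod m + 1) mod m)"
    proof -
      have p: "m > 0" using m3 by simp
      have "(l + i0) mod m < length vs" "(l' + i0) mod m < length vs" using p by (simp_all add: m_def)
      then show ?thesis using adj wsn[OF that(1)] wsn[OF that(2)] by (simp add: m_def)
    qed
    also have "\<dots> \<longleftrightarrow> ((l' + i0) mod m = (l + 1 + i0) mod m \<or> (l + i0) mod m = (l' + 1 + i0) mod m)"
      by (simp add: mod_Suc_eq add.commute add.left_commute)
    also have "\<dots> \<longleftrightarrow> (l' mod m = (l + 1) mod m \<or> l mod m = (l' + 1) mod m)"
      by (simp only: mod_add_cancel_nat)
    also have "\<dots> \<longleftrightarrow> (l' = (l + 1) mod m \<or> l = (l' + 1) mod m)" using that by simp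
    finally show ?thesis .
  qed
  define t where "t = tl ws"
  define mid where "mid = butlast (tl t)"
  have ct: "consec E t"
    unfolding consec_def
  proof (intro allI impI)
    fix l l' assume ll: "l < length t" "l' < length t"
    then have l: "Suc l < m" "Suc l' < m" using ws m3 by (auto simp: t_def)
    have "E (t ! l) (t ! l') \<longleftrightarrow> E (ws ! Suc l) (ws ! Suc l')"
      using ll by (simp add: t_def nth_tl)
    also have "\<dots> \<longleftrightarrow> (Suc l' = (Suc l + 1) mod m \<or> Suc l = (Suc l' + 1) mod m)" using adjw l by simp
    also have "\<dots> \<longleftrightarrow> (l' = Suc l \<or> l = Suc l')"
      using l by (cases "Suc (Suc l) = m"; cases "Suc (Suc l') = m") auto
    finally show "E (t ! l) (t ! l') \<longleftrightarrow> (l' = Suc l \<or> l = Suc l')" .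
  qed
  have cmid: "consec E mid" unfolding mid_def by (intro consec_butlast consec_tl ct)
  obtain v0 where ws0: "ws = v0 # t" using ws m3 unfolding t_def by (cases ws) auto
  have v0C: "v0 \<in> C" using ws ws0 by auto
  have dt: "distinct t" using ws ws0 by simp
  have lt: "length t = m - 1" using ws by (simp add: t_def)
  obtain x t' where tx: "t = x # t'" using lt m3 by (cases t) auto
  obtain u y where t'uy: "t' = u @ [y]" using lt m3 tx by (cases t' rule: rev_cases) auto
  have midu: "mid = u" by (simp add: mid_def tx t'uy)
  have finX: "finite V" by (rule finV)
  have Vdec: "V = (V - C) \<union> set ws" using ws CV by auto
  have "cmin V E \<le> cmin (V - {v0}) E + cmin (V - insert v0 {z. E v0 z}) E"
    using split_vertex[OF finV _ sym irr, of v0] v0C CV by auto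
  moreover have "V - {v0} = (V - C) \<union> set t"
    using Vdec ws0 ws by auto
  moreover have "V - insert v0 {z. E v0 z} = ((V - C) - {z. E v0 z}) \<union> set mid"
  proof -
    have nb: "E v0 z \<longleftrightarrow> (z = x \<or> z = y)" if zt: "z \<in> set t" for z
    proof -
      obtain l where l: "l < length t" "z = t ! l" using zt by (metis in_set_conv_nth)
      have "E v0 z \<longleftrightarrow> E (ws ! 0) (ws ! Suc l)" using ws0 l by simp
      also have "\<dots> \<longleftrightarrow> (Suc l = 1 \<or> 0 = (Suc l + 1) mod m)" using adjw l lt m3 by simp
      also have "\<dots> \<longleftrightarrow> (l = 0 \<or> Suc l = m - 1)"
      proof -
        have le: "Suc l + 1 \<le> m" using l lt by simp
        have "(Suc l + 1) mod m = 0 \<longleftrightarrow> Suc l + 1 = m"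
        proof (cases "Suc l + 1 = m")
          case True then show ?thesis by simp
        next
          case False then have "Suc l + 1 < m" using le by simp
          then show ?thesis by simp
        qed
        then show ?thesis using m3 by auto
      qed
      also have "\<dots> \<longleftrightarrow> (z = x \<or> z = y)"
      proof -
        have "t ! 0 = x" by (simp add: tx)
        moreover have "t ! (m - 2) = y"
        proof -
          have "m - 2 = Suc (length u)" using lt by (simp add: tx t'uy)
          then show ?thesis by (simp add: tx t'uy nth_append)
        qed
        moreover have i1: "t ! l = t ! 0 \<longleftrightarrow> l = 0" using dt l(1) lt m3 by (intro nth_eq_iff_index_eq) auto
        moreover have i2: "t ! l = t ! (m - 2) \<longleftrightarrow> l = m - 2" using dt l(1) lt m3 by (intro nth_eq_iff_index_eq) auto
        moreover have "Suc l = m - 1 \<longleftrightarrow> l = m - 2" using m3 by arith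
        ultimately show ?thesis using l(2) by metis
      qed
      finally show ?thesis .
    qed
    have "set t = insert x (insert y (set u))" by (auto simp: tx t'uy)
    moreover have "x \<notin> set u" "y \<notin> set u" "v0 \<notin> set t" using dt ws ws0 by (auto simp: tx t'uy)
    ultimately show ?thesis using Vdec ws0 nb midu v0C irr by auto
  qed
  moreover have "real (cmin ((V - C) \<union> set t) E) \<le> c * real (bb (map att t))"
  proof -
    have tC: "set t \<subseteq> C" using ws ws0 by auto
    show ?thesis using path_bound[OF sg CV hyp _ tC dt ct] unfolding att_def by blast
  qed
  moreover have "real (cmin ((V - C - {z. E v0 z}) \<union> set mid) E) \<le> c * real (bb (map att mid))"
  proof -
    have midC: "set mid \<subseteq> C" using ws ws0 by (auto simp: midu tx t'uy)
    have dmid: "distinct mid" using dt by (simp add: midu tx t'uy)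
    have W: "V - C - {z. E v0 z} \<subseteq> V - C" by blast
    show ?thesis using path_bound[OF sg CV hyp W midC dmid cmid] unfolding att_def by blast
  qed
  ultimately have main: "real (cmin V E) \<le> c * real (bb (map att t) + bb (map att mid))"
    by (simp add: distrib_left)
  have "bb (map att t) + bb (map att mid) \<le> lucas n"
  proof (cases "att v0")
    case True
    have "length (filter id (True # map att t)) = length (filter att ws)"
      using True ws0 by (simp add: filter_map comp_def)
    also have "\<dots> = card {z \<in> C. att z}"
      using ws by (simp add: distinct_card[symmetric] distinct_filter set_filter)
    also have "\<dots> \<le> n" using assms(4) by (simp add: att_def)
    finally have "length (filter id (True # map att t)) \<le> n" .
    moreover have "length (map att t) \<ge> 2" using lt m3 by simp
    ultimately have "bb (map att t) + bb (butlast (tl (map att t))) \<le> lucas n"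
      using cycle_bound_T assms(3) by blast
    then show ?thesis by (simp add: mid_def map_butlast map_tl)
  next
    case False
    have nat: "\<not> att z" if "z \<in> C" for z
    proof
      assume "att z"
      then have "\<exists>i<m. att (vs ! i)" using that vs by (auto simp: in_set_conv_nth m_def)
      then have "att (vs ! i0)" by (rule i0att)
      moreover have "vs ! i0 = v0" using wsn[of 0] m3 i0m ws0 by simp
      ultimately show False using False by simp
    qed
    have "bb (map att t) \<le> 1" using nat ws ws0 by (intro bb_allF) auto
    moreover have "bb (map att mid) \<le> 1"
    proof (rule bb_allF)
      have "set mid \<subseteq> C" using ws ws0 by (auto simp: midu tx t'uy)
      then show "\<forall>z\<in>set (map att mid). \<not> z" using nat by auto
    qed
    moreover have "3 \<le> lucas n" using lucas_ge3 assms(3) .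
    ultimately show ?thesis by simp
  qed
  then have "c * real (bb (map att t) + bb (map att mid)) \<le> c * real (lucas n)"
    using c0 by (intro mult_left_mono) auto
  then show ?thesis using main by linarith
qed


end
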